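(* Let $p=1$, $0<q<1$, $\lambda>0$, and $K:=(v\lambda q(1-q))^{\frac1{2-q}}$. Let $\{x^k\}$ be generated by PGM-GSO with stepsize $0<v<\frac12\|A\|_2^{-2}$. Then: (i) for every $i\in\{1,\dots,r\}$ and every $k\ge1$, if $x^k_{\mathcal{G}_i}\ne0$ then $\|x^k_{\mathcal{G}_i}\|_1\ge K$; (ii) there exist $N\in\mathbb{N}$ and $\mathcal{I}\subseteq\{1,\dots,r\}$ such that for all $k\ge N$: $x^k_{\mathcal{G}_i}\ne0$ for $i\in\mathcal{I}$ and $x^k_{\mathcal{G}_i}=0$ for $i\notin\mathcal{I}$.
   Context: Group structure: $\{1,\dots,n\}$ is partitioned into disjoint nonempty index sets $\mathcal{G}_1,\dots,\mathcal{G}_r$; $x_{\mathcal{G}_i}$ is the subvector indexed by $\mathcal{G}_i$; $\|x\|_{1,q}^q:=\sum_{i=1}^r\|x_{\mathcal{G}_i}\|_1^q$. Given $A\in\mathbb{R}^{m\times n}$, $b\in\mathbb{R}^m$, PGM-GSO: choose $x^0\in\mathbb{R}^n$ and for $k\ge0$ set $z^k=x^k-2vA^\top(Ax^k-b)$ and choose $x^{k+1}\in\operatorname{Arg\,min}_{x\in\mathbb{R}^n}\{\lambda\|x\|_{1,q}^q+\frac1{2v}\|x-z^k\|_2^2\}$. *)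

theory Defs
  imports "HOL-Analysis.Analysis"
begin

definition group_partition :: "(nat \<Rightarrow> 'n set) \<Rightarrow> nat \<Rightarrow> bool" where
  "group_partition G r \<longleftrightarrow>
     (\<forall>i\<in>{1..r}. G i \<noteq> {}) \<and>
     (\<forall>i\<in>{1..r}. \<forall>j\<in>{1..r}. i \<noteq> j \<longrightarrow> G i \<inter> G j = {}) \<and>
     (\<Union>i\<in>{1..r}. G i) = UNIV"

definition group_l1 :: "('n::finite) set \<Rightarrow> real^'n \<Rightarrow> real" where
  "group_l1 S x = (\<Sum>j\<in>S. \<bar>x $ j\<bar>)"

definition group_nonzero :: "('n::finite) set \<Rightarrow> real^'n \<Rightarrow> bool" where
  "group_nonzero S x \<longleftrightarrow> (\<exists>j\<in>S. x $ j \<noteq> 0)"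

definition norm_1q_pow :: "(nat \<Rightarrow> ('n::finite) set) \<Rightarrow> nat \<Rightarrow> real \<Rightarrow> real^'n \<Rightarrow> real" where
  "norm_1q_pow G r q x = (\<Sum>i=1..r. (group_l1 (G i) x) powr q)"

definition pgm_gso ::
  "(nat \<Rightarrow> ('n::finite) set) \<Rightarrow> nat \<Rightarrow> real \<Rightarrow> real \<Rightarrow> real \<Rightarrow> real^'n^'m \<Rightarrow> real^'m
     \<Rightarrow> (nat \<Rightarrow> real^'n) \<Rightarrow> bool" where
  "pgm_gso G r q lam v A b xs \<longleftrightarrow>
     (\<forall>k. let z = xs k - (2 * v) *\<^sub>R (transpose A *v (A *v xs k - b)) in
        \<forall>y. lam * norm_1q_pow G r q (xs (Suc k)) + (1 / (2 * v)) * (norm (xs (Suc k) - z))\<^sup>2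
            \<le> lam * norm_1q_pow G r q y + (1 / (2 * v)) * (norm (y - z))\<^sup>2)"

end

theory Submission
  imports Defs "HOL-Real_Asymp.Real_Asymp"
begin

lemma group_l1_scale_same:
  assumes "t \<ge> 0"
  shows "group_l1 S (\<chi> j. if j \<in> S then t * x$j else x$j) = t * group_l1 S x"
  unfolding group_l1_def using assms
  by (simp add: sum_distrib_left abs_mult)

lemma group_l1_scale_other:
  assumes "S \<inter> T = {}"
  shows "group_l1 S (\<chi> j. if j \<in> T then t * x$j else x$j) = group_l1 S x"
  unfolding group_l1_def using assms
  by (intro sum.cong) auto

lemma norm_1q_scale:
  assumes gp: "group_partition G r" and i: "i \<in> {1..r}" and t: "t \<ge> 0"
  shows "norm_1q_pow G r q (\<chi> j. if j \<in> G i then t * x$j else x$j)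
       = norm_1q_pow G r q x - group_l1 (G i) x powr q + (t * group_l1 (G i) x) powr q"
proof -
  let ?y = "(\<chi> j. if j \<in> G i then t * x$j else x$j)"
  have other: "\<And>i'. i' \<in> {1..r} - {i} \<Longrightarrow> group_l1 (G i') ?y = group_l1 (G i') x"
    using gp i unfolding group_partition_def by (intro group_l1_scale_other) auto
  have "norm_1q_pow G r q ?y = group_l1 (G i) ?y powr q + (\<Sum>i'\<in>{1..r}-{i}. group_l1 (G i') ?y powr q)"
    unfolding norm_1q_pow_def using i by (simp add: sum.remove)
  also have "\<dots> = (t * group_l1 (G i) x) powr q + (\<Sum>i'\<in>{1..r}-{i}. group_l1 (G i') x powr q)"
    using other t by (simp add: group_l1_scale_same)
  also have "norm_1q_pow G r q x = group_l1 (G i) x powr q + (\<Sum>i'\<in>{1..r}-{i}. group_l1 (G i') x powr q)"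
    unfolding norm_1q_pow_def using i by (simp add: sum.remove)
  ultimately show ?thesis by simp
qed

lemma norm_sq_sum: "(norm (w::real^'n::finite))^2 = (\<Sum>j\<in>UNIV. (w$j)^2)"
  unfolding power2_norm_eq_inner inner_vec_def by (simp add: power2_eq_square)

lemma norm_sq_comb:
  fixes x z :: "real^'n::finite"
  shows "(norm ((\<chi> j. if j\<in>S then (1+h)*x$j else x$j) - z))^2
       + (norm ((\<chi> j. if j\<in>S then (1-h)*x$j else x$j) - z))^2 - 2*(norm (x - z))^2
       = 2*h^2*(\<Sum>j\<in>S. (x$j)^2)"
proof -
  have "2*h^2*(\<Sum>j\<in>S. (x$j)^2) = (\<Sum>j\<in>UNIV. if j \<in> S then 2*h^2*(x$j)^2 else 0)"
    by (simp add: sum.If_cases sum_distrib_left)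
  also have "\<dots> = (\<Sum>j\<in>UNIV. ((if j\<in>S then (1+h)*x$j else x$j) - z$j)^2
       + ((if j\<in>S then (1-h)*x$j else x$j) - z$j)^2 - 2*(x$j - z$j)^2)"
    by (intro sum.cong) (auto simp: power2_eq_square algebra_simps)
  also have "\<dots> = (norm ((\<chi> j. if j\<in>S then (1+h)*x$j else x$j) - z))^2
       + (norm ((\<chi> j. if j\<in>S then (1-h)*x$j else x$j) - z))^2 - 2*(norm (x - z))^2"
    unfolding norm_sq_sum by (simp add: sum.distrib sum_subtractf sum_distrib_left)
  finally show ?thesis by simp
qed

lemma sumsq_le_l1sq:
  fixes x :: "real^'n::finite"
  shows "(\<Sum>j\<in>S. (x$j)^2) \<le> (group_l1 S x)^2"
proof -
  have "(\<Sum>j\<in>S. (x$j)^2) \<le> (\<Sum>j\<in>S. \<bar>x$j\<bar> * group_l1 S x)"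
  proof (intro sum_mono)
    fix j assume "j \<in> S"
    hence "\<bar>x$j\<bar> \<le> group_l1 S x" unfolding group_l1_def
      by (intro member_le_sum) auto
    thus "(x$j)^2 \<le> \<bar>x$j\<bar> * group_l1 S x"
      by (metis abs_ge_zero mult_left_mono power2_abs power2_eq_square)
  qed
  also have "\<dots> = (group_l1 S x)^2" unfolding group_l1_def
    by (simp add: sum_distrib_right power2_eq_square)
  finally show ?thesis .
qed


lemma part1:
  fixes G :: "nat \<Rightarrow> ('n::finite) set" and r :: nat
    and A :: "real^'n^'m" and b :: "real^'m"
    and q lam v :: real and xs :: "nat \<Rightarrow> real^'n"
  assumes gp: "group_partition G r"
    and q0: "0 < q" and q1: "q < 1" and lam: "0 < lam"
    and v: "0 < v" and pg: "pgm_gso G r q lam v A b xs"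
    and i: "i \<in> {1..r}" and nz: "group_nonzero (G i) (xs (Suc k))"
  shows "group_l1 (G i) (xs (Suc k)) \<ge> (v * lam * q * (1 - q)) powr (1 / (2 - q))"
proof -
  define x where "x = xs (Suc k)"
  define z where "z = xs k - (2 * v) *\<^sub>R (transpose A *v (A *v xs k - b))"
  define \<Phi> where "\<Phi> y = lam * norm_1q_pow G r q y + (1 / (2 * v)) * (norm (y - z))\<^sup>2" for y
  have min: "\<And>y. \<Phi> x \<le> \<Phi> y"
    using pg unfolding pgm_gso_def Let_def \<Phi>_def x_def z_def by blast
  define s where "s = group_l1 (G i) x"
  define Q where "Q = (\<Sum>j\<in>G i. (x$j)^2)"
  have Qs: "Q \<le> s^2" unfolding Q_def s_def by (rule sumsq_le_l1sq)
  obtain j where j: "j \<in> G i" "x$j \<noteq> 0" using nz unfolding group_nonzero_def x_def by blast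
  have "\<bar>x$j\<bar> \<le> s" unfolding s_def group_l1_def using j by (intro member_le_sum) auto
  hence s0: "s > 0" using j by auto
  define B where "B = s^2 / (v * lam * s powr q)"
  have bound: "(2 - (1+h) powr q - (1-h) powr q)/h^2 \<le> B" if h: "0 < h" "h < 1" for h
  proof -
    define y1 where "y1 = (\<chi> j. if j\<in>G i then (1+h)*x$j else x$j)"
    define y2 where "y2 = (\<chi> j. if j\<in>G i then (1-h)*x$j else x$j)"
    have P1: "norm_1q_pow G r q y1 = norm_1q_pow G r q x - s powr q + (1+h) powr q * s powr q"
      unfolding y1_def s_def using norm_1q_scale[OF gp i, of "1+h" q x] h s0 s_def
      by (simp add: powr_mult)
    have P2: "norm_1q_pow G r q y2 = norm_1q_pow G r q x - s powr q + (1-h) powr q * s powr q"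
      unfolding y2_def s_def using norm_1q_scale[OF gp i, of "1-h" q x] h s0 s_def
      by (simp add: powr_mult)
    have N: "(norm (y1 - z))^2 + (norm (y2 - z))^2 - 2*(norm (x - z))^2 = 2*h^2*Q"
      unfolding y1_def y2_def Q_def by (rule norm_sq_comb)
    have "\<Phi> x \<le> \<Phi> y1" "\<Phi> x \<le> \<Phi> y2" using min by auto
    hence "lam * (s powr q * (2 - (1+h) powr q - (1-h) powr q))
        \<le> (1 / (2 * v)) * ((norm (y1 - z))^2 + (norm (y2 - z))^2 - 2*(norm (x - z))^2)"
      unfolding \<Phi>_def P1 P2 by (simp add: algebra_simps)
    also have "\<dots> = h^2 * Q / v" using N v by simp
    also have "\<dots> \<le> h^2 * s^2 / v" using Qs v by (intro divide_right_mono mult_left_mono) auto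
    finally have *: "lam * (s powr q * (2 - (1+h) powr q - (1-h) powr q)) \<le> h^2 * s^2 / v" .
    have pos: "v * lam * s powr q > 0" using v lam s0 by simp
    have "(v * lam * s powr q) * (2 - (1+h) powr q - (1-h) powr q) \<le> h^2 * s^2"
      using * v by (simp add: field_simps)
    thus ?thesis unfolding B_def using pos h
      by (simp add: field_simps)
  qed
  have lim: "((\<lambda>h::real. (2 - (1+h) powr q - (1-h) powr q)/h^2) \<longlongrightarrow> q*(1-q)) (at_right 0)"
    using q0 q1 by (real_asymp simp: algebra_simps)
  have ev: "eventually (\<lambda>h. (2 - (1+h) powr q - (1-h) powr q)/h^2 \<le> B) (at_right (0::real))"
    by (rule eventually_at_rightI[of 0 1]) (auto intro: bound)
  have qB: "q*(1-q) \<le> B"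
    by (rule tendsto_upperbound[OF lim ev]) simp
  have pos: "v * lam * s powr q > 0" using v lam s0 by simp
  have "q*(1-q) * (v * lam * s powr q) \<le> s^2"
    using qB pos unfolding B_def using pos_le_divide_eq by blast
  hence "(v * lam * q * (1 - q)) * s powr q \<le> s^2" by (simp only: ac_simps)
  moreover have "s powr q > 0" using s0 by simp
  ultimately have "v * lam * q * (1 - q) \<le> s^2 / s powr q"
    using pos_le_divide_eq by blast
  also have "s^2 / s powr q = s powr (2 - q)"
  proof -
    have "s powr (2-q) = s powr 2 / s powr q" by (rule powr_diff)
    moreover have "s powr 2 = s^2" using s0 by (simp add: powr_numeral)
    ultimately show ?thesis by simp
  qed
  finally have le: "v * lam * q * (1 - q) \<le> s powr (2 - q)" .
  have "(v * lam * q * (1 - q)) powr (1 / (2 - q)) \<le> (s powr (2 - q)) powr (1 / (2 - q))"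
    using le q0 q1 v lam by (intro powr_mono2) auto
  also have "\<dots> = s" using s0 q1 by (simp add: powr_powr)
  finally show ?thesis unfolding s_def x_def .
qed


lemma norm_add_sq: "(norm ((d::'a::real_inner) + u))^2 = (norm d)^2 + 2 * (d \<bullet> u) + (norm u)^2"
  by (simp add: power2_norm_eq_inner inner_add_left inner_add_right inner_commute)

lemma descent:
  fixes G :: "nat \<Rightarrow> ('n::finite) set" and r :: nat
    and A :: "real^'n^'m" and b :: "real^'m"
    and q lam v :: real and xs :: "nat \<Rightarrow> real^'n"
  assumes v: "0 < v" and pg: "pgm_gso G r q lam v A b xs"
  shows "(norm (A *v xs (Suc k) - b))^2 + lam * norm_1q_pow G r q (xs (Suc k))
     \<le> (norm (A *v xs k - b))^2 + lam * norm_1q_pow G r q (xs k)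
        - (1 / (2 * v) - (onorm (\<lambda>x. A *v x))\<^sup>2) * (norm (xs (Suc k) - xs k))^2"
proof -
  define x0 where "x0 = xs k"
  define x1 where "x1 = xs (Suc k)"
  define d where "d = x1 - x0"
  define w where "w = A *v x0 - b"
  define g where "g = transpose A *v w"
  define z where "z = x0 - (2 * v) *\<^sub>R g"
  define P0 where "P0 = norm_1q_pow G r q x0"
  define P1 where "P1 = norm_1q_pow G r q x1"
  define L where "L = onorm (\<lambda>x. A *v x)"
  have min: "lam * P1 + (1 / (2 * v)) * (norm (x1 - z))\<^sup>2
            \<le> lam * P0 + (1 / (2 * v)) * (norm (x0 - z))\<^sup>2"
    using pg unfolding pgm_gso_def Let_def P0_def P1_def z_def g_def w_def x0_def x1_def by blast
  have e1: "x1 - z = d + (2 * v) *\<^sub>R g" unfolding d_def z_def by simp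
  have e2: "x0 - z = (2 * v) *\<^sub>R g" unfolding z_def by simp
  have "(norm (x1 - z))\<^sup>2 = (norm d)^2 + 4 * v * (d \<bullet> g) + (norm ((2 * v) *\<^sub>R g))^2"
    unfolding e1 norm_add_sq by simp
  with min e2 have m2: "lam * P1 + (1 / (2 * v)) * ((norm d)^2 + 4 * v * (d \<bullet> g)) \<le> lam * P0"
    by (simp add: algebra_simps)
  have "(1 / (2 * v)) * ((norm d)^2 + 4 * v * (d \<bullet> g)) = (norm d)^2 / (2 * v) + 2 * (d \<bullet> g)"
    using v by (simp add: field_simps)
  with m2 have m3: "lam * P1 + (norm d)^2 / (2 * v) + 2 * (d \<bullet> g) \<le> lam * P0" by simp
  have ax: "A *v x1 - b = w + A *v d" unfolding d_def w_def by (simp add: algebra_simps)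
  have wg: "w \<bullet> (A *v d) = d \<bullet> g"
    unfolding g_def transpose_matrix_vector dot_lmul_matrix[symmetric] by (simp add: inner_commute)
  have f1: "(norm (A *v x1 - b))^2 = (norm w)^2 + 2 * (d \<bullet> g) + (norm (A *v d))^2"
    unfolding ax norm_add_sq wg by simp
  have "norm (A *v d) \<le> L * norm d"
    unfolding L_def using onorm[OF matrix_vector_mul_bounded_linear[of A]] by simp
  hence f2: "(norm (A *v d))^2 \<le> L^2 * (norm d)^2"
    by (metis norm_ge_zero power_mono power_mult_distrib)
  have "(norm (A *v x1 - b))^2 + lam * P1 \<le> (norm w)^2 + lam * P0 - ((norm d)^2 / (2 * v) - L^2 * (norm d)^2)"
    using f1 f2 m3 by linarith
  moreover have "(1 / (2 * v) - L^2) * (norm d)^2 = (norm d)^2 / (2 * v) - L^2 * (norm d)^2"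
    by (simp add: algebra_simps)
  ultimately show ?thesis
    unfolding x0_def[symmetric] x1_def[symmetric] L_def[symmetric] d_def[symmetric]
      P0_def[symmetric] P1_def[symmetric] w_def[symmetric] by linarith
qed


lemma l1_le_norm_diff:
  fixes x y :: "real^'n::finite"
  assumes "\<not> group_nonzero S y"
  shows "group_l1 S x \<le> real CARD('n) * norm (y - x)"
proof -
  have "group_l1 S x \<le> (\<Sum>j\<in>S. norm (y - x))"
    unfolding group_l1_def
  proof (intro sum_mono)
    fix j assume "j \<in> S"
    hence "y$j = 0" using assms unfolding group_nonzero_def by auto
    hence "\<bar>x$j\<bar> = \<bar>(y - x)$j\<bar>" by simp
    thus "\<bar>x$j\<bar> \<le> norm (y - x)" using component_le_norm_cart by metis
  qed
  also have "\<dots> = real (card S) * norm (y - x)" by simp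
  also have "\<dots> \<le> real CARD('n) * norm (y - x)"
    by (intro mult_right_mono) (auto intro: card_mono)
  finally show ?thesis .
qed

lemma norm_1q_nonneg: "norm_1q_pow G r q x \<ge> 0"
  unfolding norm_1q_pow_def by (intro sum_nonneg) simp

theorem lemma3p1:
  fixes G :: "nat \<Rightarrow> ('n::finite) set" and r :: nat
    and A :: "real^'n^'m" and b :: "real^'m"
    and q lam v :: real and xs :: "nat \<Rightarrow> real^'n"
  assumes "group_partition G r"
    and "0 < q" and "q < 1" and "0 < lam"
    and "0 < v" and "v * (onorm (\<lambda>x. A *v x))\<^sup>2 < 1 / 2"
    and "pgm_gso G r q lam v A b xs"
  shows "(\<forall>i\<in>{1..r}. \<forall>k\<ge>1. group_nonzero (G i) (xs k) \<longrightarrow>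
            group_l1 (G i) (xs k) \<ge> (v * lam * q * (1 - q)) powr (1 / (2 - q)))
       \<and> (\<exists>N::nat. \<exists>I. I \<subseteq> {1..r} \<and>
            (\<forall>k\<ge>N. (\<forall>i\<in>I. group_nonzero (G i) (xs k)) \<and>
                    (\<forall>i\<in>{1..r} - I. \<not> group_nonzero (G i) (xs k))))"
proof -
  note gp = assms(1) and q0 = assms(2) and q1 = assms(3) and lam = assms(4)
    and v = assms(5) and vL = assms(6) and pg = assms(7)
  define K where "K = (v * lam * q * (1 - q)) powr (1 / (2 - q))"
  have K0: "K > 0" unfolding K_def using q0 q1 v lam by simp
  have P1: "\<forall>i\<in>{1..r}. \<forall>k\<ge>1. group_nonzero (G i) (xs k) \<longrightarrow> group_l1 (G i) (xs k) \<ge> K"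
  proof (intro ballI allI impI)
    fix i k assume i: "i \<in> {1..r}" and k: "(1::nat) \<le> k" and nz: "group_nonzero (G i) (xs k)"
    obtain k' where kk: "k = Suc k'" using k by (cases k) auto
    show "group_l1 (G i) (xs k) \<ge> K"
      unfolding K_def kk using part1[OF gp q0 q1 lam v pg i] nz kk by blast
  qed
  define L where "L = onorm (\<lambda>x. A *v x)"
  define c where "c = 1 / (2 * v) - L^2"
  have c0: "c > 0" unfolding c_def L_def using vL v by (simp add: field_simps)
  define F where "F k = (norm (A *v xs k - b))^2 + lam * norm_1q_pow G r q (xs k)" for k
  define D where "D k = norm (xs (Suc k) - xs k)" for k
  have dec: "F (Suc k) \<le> F k - c * (D k)^2" for k
    unfolding F_def c_def L_def D_def using descent[OF v pg, of k] by simp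
  have Dn: "c * (D k)^2 \<ge> 0" for k using c0 by simp
  have "decseq F" unfolding decseq_Suc_iff using dec Dn by (metis diff_ge_0_iff_ge le_diff_eq order_trans add_increasing2 diff_add_cancel)
  moreover have "\<forall>k. 0 \<le> F k" unfolding F_def using lam norm_1q_nonneg by (auto intro!: add_nonneg_nonneg mult_nonneg_nonneg simp: less_imp_le)
  ultimately obtain Lm where Lm: "F \<longlonglongrightarrow> Lm" by (rule decseq_convergent)
  have "(\<lambda>k. F k - F (Suc k)) \<longlonglongrightarrow> Lm - Lm"
    by (intro tendsto_diff Lm LIMSEQ_Suc)
  hence lim0: "(\<lambda>k. F k - F (Suc k)) \<longlonglongrightarrow> 0" by simp
  define \<epsilon> where "\<epsilon> = K / real CARD('n)"
  have e0: "\<epsilon> > 0" unfolding \<epsilon>_def using K0 by simp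
  have "eventually (\<lambda>k. F k - F (Suc k) < c * \<epsilon>^2) sequentially"
    using order_tendstoD(2)[OF lim0] c0 e0 by simp
  then obtain N0 where N0: "\<And>k. k \<ge> N0 \<Longrightarrow> F k - F (Suc k) < c * \<epsilon>^2"
    unfolding eventually_sequentially by blast
  have small: "real CARD('n) * D k < K" if "k \<ge> N0" for k
  proof -
    have "c * (D k)^2 < c * \<epsilon>^2" using N0[OF that] dec[of k] by linarith
    hence "(D k)^2 < \<epsilon>^2" using c0 by simp
    hence "D k < \<epsilon>" using e0 by (smt (verit) power_mono D_def norm_ge_zero)
    thus ?thesis unfolding \<epsilon>_def by (simp add: field_simps)
  qed
  have stp: "group_nonzero (G i) (xs (Suc k)) = group_nonzero (G i) (xs k)"
    if k: "k \<ge> N0 + 1" and i: "i \<in> {1..r}" for k i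
  proof -
    have k1: "k \<ge> 1" "Suc k \<ge> 1" using k by auto
    have sm: "real CARD('n) * D k < K" using small k by simp
    show ?thesis
    proof (rule ccontr)
      assume ne: "group_nonzero (G i) (xs (Suc k)) \<noteq> group_nonzero (G i) (xs k)"
      show False
      proof (cases "group_nonzero (G i) (xs k)")
        case True
        hence "\<not> group_nonzero (G i) (xs (Suc k))" using ne by simp
        hence "group_l1 (G i) (xs k) \<le> real CARD('n) * D k"
          unfolding D_def by (rule l1_le_norm_diff)
        moreover have "group_l1 (G i) (xs k) \<ge> K" using P1 i k1 True by blast
        ultimately show False using sm by simp
      next
        case False
        hence nz: "group_nonzero (G i) (xs (Suc k))" using ne by simp
        have "group_l1 (G i) (xs (Suc k)) \<le> real CARD('n) * norm (xs k - xs (Suc k))"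
          using False by (rule l1_le_norm_diff)
        hence "group_l1 (G i) (xs (Suc k)) \<le> real CARD('n) * D k"
          unfolding D_def by (simp add: norm_minus_commute)
        moreover have "group_l1 (G i) (xs (Suc k)) \<ge> K" using P1 i k1 nz by blast
        ultimately show False using sm by simp
      qed
    qed
  qed
  define N where "N = N0 + 1"
  define I where "I = {i\<in>{1..r}. group_nonzero (G i) (xs N)}"
  have const: "\<forall>i\<in>{1..r}. group_nonzero (G i) (xs k) = group_nonzero (G i) (xs N)"
    if "k \<ge> N" for k
    using that
  proof (induction k rule: dec_induct)
    case base
    then show ?case by simp
  next
    case (step n)
    then show ?case using stp[of n] unfolding N_def by simp
  qed
  have P2: "\<exists>N::nat. \<exists>I. I \<subseteq> {1..r} \<and>
            (\<forall>k\<ge>N. (\<forall>i\<in>I. group_nonzero (G i) (xs k)) \<and>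
                    (\<forall>i\<in>{1..r} - I. \<not> group_nonzero (G i) (xs k)))"
    by (rule exI[of _ N], rule exI[of _ I]) (auto simp: I_def dest: const)
  show ?thesis using P1 P2 unfolding K_def by blast
qed

end
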